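(* Let $n\ge1$, $N_b\ge0$ with $2N_b+1\le n$, and $p\in[0,1]$. For the golf process on $\mathbb{Z}/n\mathbb{Z}$ under $\mathbb{P}^{n,N_b,N_b+1,p}$, for every $x\in\mathbb{Z}/n\mathbb{Z}$, $$\mathbb{P}^{n,N_b,N_b+1,p}(H^1=\{x\})=\frac1n\quad\text{and}\quad\mathbb{P}^{n,N_b,N_b+1,p}(H^1=\{x\}\mid x\in H^0)=\frac{1}{N_b+1}.$$
   Context: Golf process on $\mathbb{Z}/n\mathbb{Z}$ under $\mathbb{P}^{n,N_b,N_h,p}$: initial configuration uniform among assignments of states with exactly $N_b$ balls and $N_h$ holes (set $H^0$), the rest neutral; clocks i.i.d. uniform on $[0,1]$; at its clock time each ball performs an independent random walk (step $+1$ w.p. $p$, $-1$ w.p. $1-p$) stopped at the first not-yet-filled hole, which it fills. $H^1$ is the set of holes never filled. *)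

theory Defs
  imports "HOL-Probability.Probability"
begin

text \<open>Golf process on Z/nZ, sites represented by 0..<n.\<close>

datatype site_state = Ball | Hole | Neutral

definition golf_configs :: "nat \<Rightarrow> nat \<Rightarrow> nat \<Rightarrow> (nat \<Rightarrow> site_state) set" where
  "golf_configs n Nb Nh = {c. (\<forall>y. n \<le> y \<longrightarrow> c y = Neutral)
      \<and> card {y. y < n \<and> c y = Ball} = Nb \<and> card {y. y < n \<and> c y = Hole} = Nh}"

definition walk_pos :: "nat \<Rightarrow> nat \<Rightarrow> bool stream \<Rightarrow> nat \<Rightarrow> nat" where
  "walk_pos n x s k = nat ((int x + (\<Sum>i<k. if s !! i then 1 else -1)) mod int n)"

text \<open>Hole hit by the walk: first visited site in the set U of not-yet-filled holes
  (None if never hit, a null event).\<close>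
definition walk_hit :: "nat \<Rightarrow> nat \<Rightarrow> bool stream \<Rightarrow> nat set \<Rightarrow> nat option" where
  "walk_hit n x s U = (if \<exists>k. walk_pos n x s k \<in> U
      then Some (walk_pos n x s (LEAST k. walk_pos n x s k \<in> U)) else None)"

type_synonym golf_outcome = "(nat \<Rightarrow> site_state) \<times> (nat \<Rightarrow> real \<times> bool stream)"

text \<open>Probability space: uniform initial configuration, and independently for each site
  a clock uniform on [0,1] and a Bernoulli(p) step stream (used by the ball at that site).\<close>
definition golf_space :: "nat \<Rightarrow> nat \<Rightarrow> nat \<Rightarrow> real \<Rightarrow> golf_outcome measure" where
  "golf_space n Nb Nh p =
     measure_pmf (pmf_of_set (golf_configs n Nb Nh)) \<Otimes>\<^sub>M
     (\<Pi>\<^sub>M y\<in>{..<n}. uniform_measure lborel {0..1::real} \<Otimes>\<^sub>M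
                     stream_space (measure_pmf (bernoulli_pmf p)))"

definition golf_H0 :: "nat \<Rightarrow> golf_outcome \<Rightarrow> nat set" where
  "golf_H0 n \<omega> = {y. y < n \<and> fst \<omega> y = Hole}"

definition golf_balls :: "nat \<Rightarrow> golf_outcome \<Rightarrow> nat set" where
  "golf_balls n \<omega> = {y. y < n \<and> fst \<omega> y = Ball}"

text \<open>Balls ordered by increasing clock (ties, a null event, broken by site index).\<close>
definition golf_order :: "nat \<Rightarrow> golf_outcome \<Rightarrow> nat list" where
  "golf_order n \<omega> = sort_key (\<lambda>y. fst (snd \<omega> y)) (sorted_list_of_set (golf_balls n \<omega>))"

definition golf_step :: "nat \<Rightarrow> golf_outcome \<Rightarrow> nat \<Rightarrow> nat set \<Rightarrow> nat set" where
  "golf_step n \<omega> y U = (case walk_hit n y (snd (snd \<omega> y)) U of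
      Some h \<Rightarrow> U - {h} | None \<Rightarrow> U)"

definition golf_H1 :: "nat \<Rightarrow> golf_outcome \<Rightarrow> nat set" where
  "golf_H1 n \<omega> = fold (golf_step n \<omega>) (golf_order n \<omega>) (golf_H0 n \<omega>)"

definition golf_prob :: "nat \<Rightarrow> nat \<Rightarrow> nat \<Rightarrow> real \<Rightarrow> golf_outcome set \<Rightarrow> real" where
  "golf_prob n Nb Nh p A = measure (golf_space n Nb Nh p) (A \<inter> space (golf_space n Nb Nh p))"

definition golf_cond_prob :: "nat \<Rightarrow> nat \<Rightarrow> nat \<Rightarrow> real \<Rightarrow> golf_outcome set \<Rightarrow> golf_outcome set \<Rightarrow> real" where
  "golf_cond_prob n Nb Nh p A B = golf_prob n Nb Nh p (A \<inter> B) / golf_prob n Nb Nh p B"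

end

theory Submission
  imports Defs
begin

definition rot :: "nat \<Rightarrow> nat \<Rightarrow> nat" where "rot n y = Suc y mod n"
definition rinv :: "nat \<Rightarrow> nat \<Rightarrow> nat" where "rinv n y = (y + n - 1) mod n"

lemma rot_lt: "1 \<le> n \<Longrightarrow> rot n y < n" by (simp add: rot_def)
lemma rinv_lt: "1 \<le> n \<Longrightarrow> rinv n y < n" by (simp add: rinv_def)
lemma rot_rinv: "y < n \<Longrightarrow> rot n (rinv n y) = y"
proof (cases "y = 0")
  case True
  assume "y < n" then show ?thesis using True by (simp add: rot_def rinv_def)
next
  case False
  assume y: "y < n"
  have "y + n - 1 = (y - 1) + n" using False by arith
  then have "rinv n y = ((y - 1) + n) mod n" unfolding rinv_def by (rule arg_cong)
  also have "\<dots> = y - 1" using y by simp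
  finally have "rinv n y = y - 1" .
  then show ?thesis using y False by (simp add: rot_def)
qed
lemma rinv_rot: "y < n \<Longrightarrow> rinv n (rot n y) = y"
proof (cases "Suc y < n")
  case True
  assume "y < n" then show ?thesis using True by (simp add: rot_def rinv_def)
next
  case False
  assume "y < n" then have "n = Suc y" using False by simp
  then show ?thesis by (simp add: rot_def rinv_def)
qed
lemma inj_rot: "inj_on (rot n) {..<n}"
  by (metis inj_on_inverseI lessThan_iff rinv_rot)
lemma rot_image: assumes n: "1 \<le> n" shows "rot n ` {..<n} = {..<n}"
proof
  show "rot n ` {..<n} \<subseteq> {..<n}" using rot_lt[OF n] by auto
  show "{..<n} \<subseteq> rot n ` {..<n}"
  proof
    fix y assume "y \<in> {..<n}"
    then have "y = rot n (rinv n y)" by (simp add: rot_rinv)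
    moreover have "rinv n y \<in> {..<n}" using rinv_lt[OF n] by simp
    ultimately show "y \<in> rot n ` {..<n}" by (rule image_eqI)
  qed
qed

lemma walk_pos_lt: "1 \<le> n \<Longrightarrow> walk_pos n y s k < n"
  unfolding walk_pos_def by (simp add: nat_less_iff)

lemma walk_pos_rot: "1 \<le> n \<Longrightarrow> walk_pos n (rot n y) s k = rot n (walk_pos n y s k)"
proof -
  assume n: "1 \<le> n"
  define S :: int where "S = (\<Sum>i<k. if s !! i then 1 else -1)"
  have "walk_pos n (rot n y) s k = nat ((int (Suc y mod n) + S) mod int n)"
    unfolding walk_pos_def S_def rot_def ..
  also have "int (Suc y mod n) = (int y + 1) mod int n" by (simp add: zmod_int add.commute)
  also have "((int y + 1) mod int n + S) mod int n = ((int y + S) mod int n + 1) mod int n"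
    by (simp add: mod_add_left_eq mod_add_right_eq algebra_simps)
  also have "nat (((int y + S) mod int n + 1) mod int n) = Suc (nat ((int y + S) mod int n)) mod n"
    using n by (simp add: nat_mod_distrib nat_add_distrib)
  finally show ?thesis by (simp only: rot_def walk_pos_def S_def)
qed

lemma walk_hit_rot:
  assumes n: "1 \<le> n" and U: "U \<subseteq> {..<n}"
  shows "walk_hit n (rot n y) s (rot n ` U) = map_option (rot n) (walk_hit n y s U)"
proof -
  have eq: "rot n (walk_pos n y s k) \<in> rot n ` U \<longleftrightarrow> walk_pos n y s k \<in> U" for k
    by (rule inj_on_image_mem_iff[OF inj_rot]) (use walk_pos_lt[OF n] U in auto)
  show ?thesis by (simp add: walk_hit_def eq walk_pos_rot[OF n])
qed

lemma walk_hit_in: "walk_hit n y s U = Some h \<Longrightarrow> h \<in> U"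
  unfolding walk_hit_def by (auto split: if_splits intro: LeastI_ex)

lemma walk_hit_SomeI:
  assumes "z \<in> U" "walk_pos n y s k = z"
  shows "\<exists>h. walk_hit n y s U = Some h"
  using assms unfolding walk_hit_def by auto

lemma golf_step_sub: "golf_step n \<omega> y U \<subseteq> U"
  by (auto simp: golf_step_def split: option.split)

lemma fold_sub: "fold (golf_step n \<omega>) L U \<subseteq> U"
proof (induction L arbitrary: U)
  case Nil then show ?case by simp
next
  case (Cons a L)
  then show ?case using golf_step_sub[of n \<omega> a U] by (simp, blast)
qed

lemma golf_step_rot:
  assumes n: "1 \<le> n" and U: "U \<subseteq> {..<n}"
    and s: "snd (snd \<omega>' (rot n y)) = snd (snd \<omega> y)"
  shows "golf_step n \<omega>' (rot n y) (rot n ` U) = rot n ` golf_step n \<omega> y U"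
proof (cases "walk_hit n y (snd (snd \<omega> y)) U")
  case None
  then show ?thesis unfolding golf_step_def s walk_hit_rot[OF n U] by simp
next
  case (Some h)
  then have h: "h \<in> U" by (rule walk_hit_in)
  have "rot n ` (U - {h}) = rot n ` U - rot n ` {h}"
    by (rule inj_on_image_set_diff[OF inj_rot]) (use U h in auto)
  then show ?thesis unfolding golf_step_def s walk_hit_rot[OF n U] using Some by simp
qed

lemma fold_rot:
  assumes n: "1 \<le> n" and s: "\<forall>y\<in>set L. snd (snd \<omega>' (rot n y)) = snd (snd \<omega> y)"
  shows "U \<subseteq> {..<n} \<Longrightarrow> fold (golf_step n \<omega>') (map (rot n) L) (rot n ` U) = rot n ` fold (golf_step n \<omega>) L U"
  using s
proof (induction L arbitrary: U)
  case Nil then show ?case by simp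
next
  case (Cons a L)
  have st: "golf_step n \<omega>' (rot n a) (rot n ` U) = rot n ` golf_step n \<omega> a U"
    using Cons.prems by (intro golf_step_rot[OF n]) auto
  have sub: "golf_step n \<omega> a U \<subseteq> {..<n}" using golf_step_sub[of n \<omega> a U] Cons.prems by blast
  show ?case using Cons.IH[OF sub] Cons.prems by (simp add: st)
qed

lemma sort_key_rot:
  assumes fin: "finite B" and g: "inj_on g B" and B': "B' = g ` B"
    and f: "\<forall>y\<in>B. f' (g y) = f y" and inj: "inj_on f B"
  shows "sort_key f' (sorted_list_of_set B') = map g (sort_key f (sorted_list_of_set B))"
proof -
  let ?A = "sort_key f' (sorted_list_of_set B')"
  let ?C = "map g (sort_key f (sorted_list_of_set B))"
  have finB': "finite B'" using fin B' by simp
  have setA: "set ?A = B'" using finB' by simp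
  have setC: "set ?C = B'" using fin B' by simp
  have dA: "distinct ?A" by simp
  have dC: "distinct ?C" using g fin by (simp add: distinct_map)
  have injf': "inj_on f' B'"
  proof (rule inj_onI)
    fix u v assume "u \<in> B'" "v \<in> B'" "f' u = f' v"
    then obtain a b where "a \<in> B" "b \<in> B" "u = g a" "v = g b" using B' by auto
    then show "u = v" using \<open>f' u = f' v\<close> f inj by (auto dest: inj_onD)
  qed
  have mC: "map f' ?C = map f (sort_key f (sorted_list_of_set B))"
    using f fin by (auto intro!: map_cong)
  have "map f' ?A = map f' ?C"
  proof (rule sorted_distinct_set_unique)
    show "sorted (map f' ?A)" by (rule sorted_sort_key)
    show "sorted (map f' ?C)" unfolding mC by (rule sorted_sort_key)
    show "distinct (map f' ?A)" using dA injf' setA by (simp add: distinct_map)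
    have "inj_on f' (set ?C)" using injf' setC by simp
    then show "distinct (map f' ?C)" by (subst distinct_map) (use dC in blast)
    show "set (map f' ?A) = set (map f' ?C)"
      unfolding list.set_map[of f' ?A] list.set_map[of f' ?C] setA setC ..
  qed
  then show ?thesis using injf' setA setC by (subst (asm) inj_on_map_eq_map) auto
qed

definition rotw :: "nat \<Rightarrow> golf_outcome \<Rightarrow> golf_outcome" where
  "rotw n \<omega> = ((\<lambda>y. if y < n then fst \<omega> (rinv n y) else fst \<omega> y), (\<lambda>y\<in>{..<n}. snd \<omega> (rinv n y)))"

lemma rotw_fst: "y < n \<Longrightarrow> fst (rotw n \<omega>) (rot n y) = fst \<omega> y"
  by (simp add: rotw_def rot_lt rinv_rot)
lemma rotw_snd: "y < n \<Longrightarrow> snd (rotw n \<omega>) (rot n y) = snd \<omega> y"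
  by (simp add: rotw_def rot_lt rinv_rot)

lemma rot_Collect: assumes n: "1 \<le> n"
  shows "{z. z < n \<and> P (rinv n z)} = rot n ` {y. y < n \<and> P y}"
proof
  show "{z. z < n \<and> P (rinv n z)} \<subseteq> rot n ` {y. y < n \<and> P y}"
  proof
    fix z assume z: "z \<in> {z. z < n \<and> P (rinv n z)}"
    then have "z = rot n (rinv n z)" by (simp add: rot_rinv)
    moreover have "rinv n z \<in> {y. y < n \<and> P y}" using z rinv_lt[OF n] by simp
    ultimately show "z \<in> rot n ` {y. y < n \<and> P y}" by (rule image_eqI)
  qed
  show "rot n ` {y. y < n \<and> P y} \<subseteq> {z. z < n \<and> P (rinv n z)}"
    using rot_lt[OF n] by (auto simp: rinv_rot)
qed

lemma balls_rotw: assumes n: "1 \<le> n" shows "golf_balls n (rotw n \<omega>) = rot n ` golf_balls n \<omega>"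
proof -
  have e: "{y. y < n \<and> fst (rotw n \<omega>) y = Ball} = {z. z < n \<and> fst \<omega> (rinv n z) = Ball}"
    by (auto simp: rotw_def)
  show ?thesis unfolding golf_balls_def e by (rule rot_Collect[OF n])
qed

lemma H0_rotw: assumes n: "1 \<le> n" shows "golf_H0 n (rotw n \<omega>) = rot n ` golf_H0 n \<omega>"
proof -
  have e: "{y. y < n \<and> fst (rotw n \<omega>) y = Hole} = {z. z < n \<and> fst \<omega> (rinv n z) = Hole}"
    by (auto simp: rotw_def)
  show ?thesis unfolding golf_H0_def e by (rule rot_Collect[OF n])
qed

lemma balls_sub: "golf_balls n \<omega> \<subseteq> {..<n}" by (auto simp: golf_balls_def)
lemma H0_sub: "golf_H0 n \<omega> \<subseteq> {..<n}" by (auto simp: golf_H0_def)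
lemma H1_sub_H0: "golf_H1 n \<omega> \<subseteq> golf_H0 n \<omega>" unfolding golf_H1_def by (rule fold_sub)

lemma order_rotw:
  assumes n: "1 \<le> n" and inj: "inj_on (\<lambda>y. fst (snd \<omega> y)) (golf_balls n \<omega>)"
  shows "golf_order n (rotw n \<omega>) = map (rot n) (golf_order n \<omega>)"
  unfolding golf_order_def
proof (rule sort_key_rot[OF _ _ balls_rotw[OF n] _ inj])
  show "finite (golf_balls n \<omega>)" by (rule finite_subset[OF balls_sub]) simp
  show "inj_on (rot n) (golf_balls n \<omega>)" by (rule inj_on_subset[OF inj_rot balls_sub])
  show "\<forall>y\<in>golf_balls n \<omega>. fst (snd (rotw n \<omega>) (rot n y)) = fst (snd \<omega> y)"
  proof
    fix y assume "y \<in> golf_balls n \<omega>"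
    then have "y < n" using balls_sub[of n \<omega>] by auto
    then show "fst (snd (rotw n \<omega>) (rot n y)) = fst (snd \<omega> y)" by (simp add: rotw_snd)
  qed
qed

lemma set_order: "set (golf_order n \<omega>) = golf_balls n \<omega>"
proof -
  have "finite (golf_balls n \<omega>)" by (rule finite_subset[OF balls_sub]) simp
  then show ?thesis by (simp add: golf_order_def)
qed

lemma H1_rotw:
  assumes n: "1 \<le> n" and inj: "inj_on (\<lambda>y. fst (snd \<omega> y)) (golf_balls n \<omega>)"
  shows "golf_H1 n (rotw n \<omega>) = rot n ` golf_H1 n \<omega>"
  unfolding golf_H1_def order_rotw[OF n inj] H0_rotw[OF n]
proof (rule fold_rot[OF n _ H0_sub])
  show "\<forall>y\<in>set (golf_order n \<omega>). snd (snd (rotw n \<omega>) (rot n y)) = snd (snd \<omega> y)"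
  proof
    fix y assume "y \<in> set (golf_order n \<omega>)"
    then have "y < n" using balls_sub[of n \<omega>] set_order[of n \<omega>] by auto
    then show "snd (snd (rotw n \<omega>) (rot n y)) = snd (snd \<omega> y)" by (simp add: rotw_snd)
  qed
qed

lemma fold_card:
  assumes st: "\<forall>y\<in>set L. \<forall>U. U \<noteq> {} \<longrightarrow> U \<subseteq> {..<n} \<longrightarrow> (\<exists>h\<in>U. golf_step n \<omega> y U = U - {h})"
  shows "U \<subseteq> {..<n} \<Longrightarrow> length L < card U \<Longrightarrow> card (fold (golf_step n \<omega>) L U) = card U - length L"
  using st
proof (induction L arbitrary: U)
  case Nil then show ?case by simp
next
  case (Cons a L)
  have fin: "finite U" using Cons.prems(1) by (rule finite_subset) simp
  have ne: "U \<noteq> {}" using Cons.prems(2) by auto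
  have "\<exists>h\<in>U. golf_step n \<omega> a U = U - {h}" using Cons.prems(1,3) ne by simp
  then obtain h where h: "h \<in> U" "golf_step n \<omega> a U = U - {h}" by blast
  have c: "card (U - {h}) = card U - 1" using h fin by simp
  have "card (fold (golf_step n \<omega>) L (U - {h})) = card (U - {h}) - length L"
    using Cons.prems c by (intro Cons.IH) auto
  then show ?case using h c by simp
qed

lemma H1_single:
  assumes n: "1 \<le> n" and c: "fst \<omega> \<in> golf_configs n Nb (Nb + 1)"
    and vis: "\<forall>y<n. \<forall>z<n. \<exists>k. walk_pos n y (snd (snd \<omega> y)) k = z"
  shows "\<exists>x<n. golf_H1 n \<omega> = {x}"
proof -
  have cb: "card (golf_balls n \<omega>) = Nb" and ch: "card (golf_H0 n \<omega>) = Nb + 1"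
    using c by (auto simp: golf_configs_def golf_balls_def golf_H0_def)
  have fb: "finite (golf_balls n \<omega>)" by (rule finite_subset[OF balls_sub]) simp
  have len: "length (golf_order n \<omega>) = Nb"
    using cb fb by (simp add: golf_order_def)
  have st: "\<forall>y\<in>set (golf_order n \<omega>). \<forall>U. U \<noteq> {} \<longrightarrow> U \<subseteq> {..<n} \<longrightarrow> (\<exists>h\<in>U. golf_step n \<omega> y U = U - {h})"
  proof (intro ballI allI impI)
    fix y U assume y: "y \<in> set (golf_order n \<omega>)" and U: "U \<noteq> {}" "U \<subseteq> {..<n}"
    have yn: "y < n" using y set_order[of n \<omega>] balls_sub[of n \<omega>] by auto
    obtain z where z: "z \<in> U" using U by auto
    then have "z < n" using U by auto
    then obtain k where "walk_pos n y (snd (snd \<omega> y)) k = z" using vis yn by blast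
    then obtain h where h: "walk_hit n y (snd (snd \<omega> y)) U = Some h"
      using walk_hit_SomeI[OF z] by blast
    then have "h \<in> U" by (rule walk_hit_in)
    then show "\<exists>h\<in>U. golf_step n \<omega> y U = U - {h}" using h by (auto simp: golf_step_def)
  qed
  have "card (golf_H1 n \<omega>) = 1"
    unfolding golf_H1_def using fold_card[OF st H0_sub] len ch by simp
  then obtain x where x: "golf_H1 n \<omega> = {x}" by (rule card_1_singletonE)
  then have "x < n" using H1_sub_H0[of n \<omega>] H0_sub[of n \<omega>] by auto
  then show ?thesis using x by blast
qed

definition "Ucl = uniform_measure lborel {0..1::real}"
definition "Sbm p = stream_space (measure_pmf (bernoulli_pmf p))"
definition "Km p = Ucl \<Otimes>\<^sub>M Sbm p"
definition "Pm n p = (\<Pi>\<^sub>M y\<in>{..<n}. Km p)"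
definition "Cm n Nb Nh = measure_pmf (pmf_of_set (golf_configs n Nb Nh))"

lemma golf_space_eq: "golf_space n Nb Nh p = Cm n Nb Nh \<Otimes>\<^sub>M Pm n p"
  by (simp add: golf_space_def Cm_def Pm_def Km_def Ucl_def Sbm_def)

lemma ps_U: "prob_space Ucl"
  unfolding Ucl_def by (rule prob_space_uniform_measure) auto
lemma ps_S: "prob_space (Sbm p)"
  unfolding Sbm_def by (rule prob_space.prob_space_stream_space[OF prob_space_measure_pmf])
lemma ps_K: "prob_space (Km p)"
  unfolding Km_def by (rule prob_space_pair[OF ps_U ps_S])
lemma ps_P: "prob_space (Pm n p)"
  unfolding Pm_def by (rule prob_space_PiM[OF ps_K])
lemma ps_C: "prob_space (Cm n Nb Nh)"
  unfolding Cm_def by (rule prob_space_measure_pmf)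
lemma ps_M: "prob_space (golf_space n Nb Nh p)"
  unfolding golf_space_eq by (rule prob_space_pair[OF ps_C ps_P])

lemma sets_Ucl: "sets Ucl = sets borel"
  unfolding Ucl_def by simp

lemma m_fst_any: "(\<lambda>\<omega>. f (fst \<omega>)) \<in> measurable (golf_space n Nb Nh p) (count_space UNIV)"
proof -
  have "f \<in> measurable (Cm n Nb Nh) (count_space UNIV)" unfolding Cm_def by simp
  then show ?thesis unfolding golf_space_eq by (rule measurable_compose[OF measurable_fst])
qed

lemma m_comp: "y < n \<Longrightarrow> (\<lambda>\<omega>. snd \<omega> y) \<in> measurable (golf_space n Nb Nh p) (Km p)"
  unfolding golf_space_eq Pm_def
  by (rule measurable_compose[OF measurable_snd measurable_component_singleton]) simp

lemma space_P_undef: "\<omega> \<in> space (golf_space n Nb Nh p) \<Longrightarrow> \<not> y < n \<Longrightarrow> snd \<omega> y = undefined"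
  unfolding golf_space_eq Pm_def by (auto simp: space_pair_measure space_PiM PiE_def extensional_def)

lemma m_clock: "(\<lambda>\<omega>. fst (snd \<omega> y)) \<in> borel_measurable (golf_space n Nb Nh p)"
proof (cases "y < n")
  case True
  have "fst \<in> measurable (Km p) Ucl" unfolding Km_def by (rule measurable_fst)
  then have "fst \<in> borel_measurable (Km p)" using sets_Ucl measurable_cong_sets by blast
  then show ?thesis by (rule measurable_compose[OF m_comp[OF True]])
next
  case False
  show ?thesis
    by (rule measurable_cong[THEN iffD2, of _ _ "\<lambda>_. fst (undefined :: real \<times> bool stream)"])
       (auto simp: space_P_undef False)
qed

lemma m_stream: "y < n \<Longrightarrow> (\<lambda>\<omega>. snd (snd \<omega> y)) \<in> measurable (golf_space n Nb Nh p) (Sbm p)"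
proof -
  assume y: "y < n"
  have "snd \<in> measurable (Km p) (Sbm p)" unfolding Km_def by (rule measurable_snd)
  then show ?thesis by (rule measurable_compose[OF m_comp[OF y]])
qed

lemma m_walk_pos: "(\<lambda>s. walk_pos n x s k) \<in> measurable (Sbm p) (count_space UNIV)"
proof -
  define h where "h = (\<lambda>l::bool list. nat ((int x + (\<Sum>i<length l. if l ! i then 1 else -1)) mod int n))"
  have eq: "walk_pos n x s k = h (stake k s)" for s
    unfolding h_def walk_pos_def by (simp add: length_stake)
  have st: "stake k \<in> measurable (Sbm p) (count_space UNIV)"
  proof -
    have "sets (Sbm p) = sets (stream_space (count_space UNIV))"
      unfolding Sbm_def by (rule sets_stream_space_cong) simp
    then show ?thesis using measurable_stake measurable_cong_sets by blast
  qed
  show ?thesis unfolding eq by (rule measurable_compose[OF st]) simp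
qed

lemma m_walk_hit: "(\<lambda>s. walk_hit n x s U) \<in> measurable (Sbm p) (count_space UNIV)"
proof -
  note m_walk_pos[measurable]
  have [measurable]: "Measurable.pred (Sbm p) (\<lambda>s. walk_pos n x s k \<in> U)" for k
    by measurable
  have [measurable]: "(\<lambda>s. LEAST k. walk_pos n x s k \<in> U) \<in> measurable (Sbm p) (count_space UNIV)"
    by measurable
  have "(\<lambda>s. walk_pos n x s (LEAST k. walk_pos n x s k \<in> U)) \<in> measurable (Sbm p) (count_space UNIV)"
    by (rule measurable_compose_countable'[where I=UNIV]) (auto intro: m_walk_pos)
  then show ?thesis unfolding walk_hit_def by measurable
qed

lemma meas_count_restrict:
  "f \<in> measurable M (count_space UNIV) \<Longrightarrow> (\<And>x. x \<in> space M \<Longrightarrow> f x \<in> A) \<Longrightarrow> f \<in> measurable M (count_space A)"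
  by (auto simp: measurable_def)

lemma m_step: "y < n \<Longrightarrow> (\<lambda>\<omega>. golf_step n \<omega> y U) \<in> measurable (golf_space n Nb Nh p) (count_space UNIV)"
proof -
  assume y: "y < n"
  have "(\<lambda>\<omega>. walk_hit n y (snd (snd \<omega> y)) U) \<in> measurable (golf_space n Nb Nh p) (count_space UNIV)"
    by (rule measurable_compose[OF m_stream[OF y] m_walk_hit])
  then show ?thesis unfolding golf_step_def
    by (rule measurable_compose[where g="\<lambda>h. case h of Some h \<Rightarrow> U - {h} | None \<Rightarrow> U"]) simp
qed

lemma m_fold: "set L \<subseteq> {..<n} \<Longrightarrow> U \<subseteq> {..<n} \<Longrightarrow>
  (\<lambda>\<omega>. fold (golf_step n \<omega>) L U) \<in> measurable (golf_space n Nb Nh p) (count_space UNIV)"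
proof (induction L arbitrary: U)
  case Nil then show ?case by simp
next
  case (Cons a L)
  have a: "a < n" using Cons.prems by auto
  have g: "(\<lambda>\<omega>. golf_step n \<omega> a U) \<in> measurable (golf_space n Nb Nh p) (count_space (Pow {..<n}))"
    by (rule meas_count_restrict[OF m_step[OF a]]) (use golf_step_sub Cons.prems in blast)
  have "(\<lambda>\<omega>. (\<lambda>V \<omega>. fold (golf_step n \<omega>) L V) (golf_step n \<omega> a U) \<omega>) \<in> measurable (golf_space n Nb Nh p) (count_space UNIV)"
    by (rule measurable_compose_countable'[OF _ g]) (use Cons in \<open>auto intro: countable_finite\<close>)
  then show ?case by simp
qed

lemma m_insort: "(\<lambda>\<omega>. insort_key (\<lambda>y. fst (snd \<omega> y)) x L) \<in> measurable (golf_space n Nb Nh p) (count_space UNIV)"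
proof (induction L)
  case Nil then show ?case by simp
next
  case (Cons a L)
  note m_clock[measurable] Cons[measurable]
  have "Measurable.pred (golf_space n Nb Nh p) (\<lambda>\<omega>. fst (snd \<omega> x) \<le> fst (snd \<omega> a))"
    by measurable
  then show ?case by simp measurable
qed

lemma m_sortkey: "(\<lambda>\<omega>. sort_key (\<lambda>y. fst (snd \<omega> y)) xs) \<in> measurable (golf_space n Nb Nh p) (count_space UNIV)"
proof (induction xs)
  case Nil then show ?case by simp
next
  case (Cons a xs)
  have "(\<lambda>\<omega>. (\<lambda>L \<omega>. insort_key (\<lambda>y. fst (snd \<omega> y)) a L) (sort_key (\<lambda>y. fst (snd \<omega> y)) xs) \<omega>) \<in> measurable (golf_space n Nb Nh p) (count_space UNIV)"
    by (rule measurable_compose_countable'[where I=UNIV, OF m_insort]) (use Cons in auto)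
  then show ?case by simp
qed

lemma m_balls: "golf_balls n \<in> measurable (golf_space n Nb Nh p) (count_space (Pow {..<n}))"
proof -
  have "(\<lambda>\<omega>. (\<lambda>c. {y. y < n \<and> c y = Ball}) (fst \<omega>)) \<in> measurable (golf_space n Nb Nh p) (count_space UNIV)"
    by (rule m_fst_any)
  then show ?thesis unfolding golf_balls_def by (rule meas_count_restrict) auto
qed

lemma m_H0: "golf_H0 n \<in> measurable (golf_space n Nb Nh p) (count_space (Pow {..<n}))"
proof -
  have "(\<lambda>\<omega>. (\<lambda>c. {y. y < n \<and> c y = Hole}) (fst \<omega>)) \<in> measurable (golf_space n Nb Nh p) (count_space UNIV)"
    by (rule m_fst_any)
  then show ?thesis unfolding golf_H0_def by (rule meas_count_restrict) auto
qed

lemma m_order: "golf_order n \<in> measurable (golf_space n Nb Nh p) (count_space {L. set L \<subseteq> {..<n}})"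
proof -
  have "(\<lambda>\<omega>. (\<lambda>B \<omega>. sort_key (\<lambda>y. fst (snd \<omega> y)) (sorted_list_of_set B)) (golf_balls n \<omega>) \<omega>) \<in> measurable (golf_space n Nb Nh p) (count_space UNIV)"
    by (rule measurable_compose_countable'[OF m_sortkey m_balls]) (auto intro: countable_finite)
  then have "golf_order n \<in> measurable (golf_space n Nb Nh p) (count_space UNIV)"
    unfolding golf_order_def[abs_def] by simp
  then show ?thesis by (rule meas_count_restrict) (use set_order balls_sub in auto)
qed

lemma m_H1: "golf_H1 n \<in> measurable (golf_space n Nb Nh p) (count_space UNIV)"
proof -
  have "(\<lambda>\<omega>. (\<lambda>V \<omega>. fold (golf_step n \<omega>) (golf_order n \<omega>) V) (golf_H0 n \<omega>) \<omega>) \<in> measurable (golf_space n Nb Nh p) (count_space UNIV)"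
  proof (rule measurable_compose_countable'[OF _ m_H0])
    fix V assume V: "V \<in> Pow {..<n}"
    show "(\<lambda>\<omega>. fold (golf_step n \<omega>) (golf_order n \<omega>) V) \<in> measurable (golf_space n Nb Nh p) (count_space UNIV)"
      by (rule measurable_compose_countable'[where f="\<lambda>L \<omega>. fold (golf_step n \<omega>) L V", OF _ m_order])
         (use V m_fold in \<open>auto intro: countableI_type\<close>)
  qed (auto intro: countable_finite)
  then show ?thesis unfolding golf_H1_def[abs_def] by simp
qed

definition rC :: "nat \<Rightarrow> (nat \<Rightarrow> site_state) \<Rightarrow> (nat \<Rightarrow> site_state)" where
  "rC n c = (\<lambda>y. if y < n then c (rinv n y) else c y)"
definition rP :: "nat \<Rightarrow> (nat \<Rightarrow> real \<times> bool stream) \<Rightarrow> (nat \<Rightarrow> real \<times> bool stream)" where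
  "rP n \<omega> = (\<lambda>y\<in>{..<n}. \<omega> (rinv n y))"

lemma rotw_split: "rotw n = (\<lambda>(x, y). (rC n x, rP n y))"
  by (auto simp: rotw_def rC_def rP_def fun_eq_iff)

lemma UNIV_site_state: "(UNIV :: site_state set) = {Ball, Hole, Neutral}"
  using site_state.exhaust by auto

lemma finite_G: "finite (golf_configs n Nb Nh)"
proof (rule finite_subset)
  show "golf_configs n Nb Nh \<subseteq> {f. \<forall>x. (x \<in> {..<n} \<longrightarrow> f x \<in> UNIV) \<and> (x \<notin> {..<n} \<longrightarrow> f x = Neutral)}"
    by (auto simp: golf_configs_def)
  show "finite {f. \<forall>x. (x \<in> {..<n} \<longrightarrow> f x \<in> (UNIV :: site_state set)) \<and> (x \<notin> {..<n} \<longrightarrow> f x = Neutral)}"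
    by (rule finite_set_of_finite_funs) (auto simp: UNIV_site_state)
qed

lemma G_ne: assumes "2 * Nb + 1 \<le> n" shows "golf_configs n Nb (Nb + 1) \<noteq> {}"
proof -
  define c where "c = (\<lambda>y. if y < Nb then Ball else if y < 2 * Nb + 1 then Hole else Neutral)"
  have "{y. y < n \<and> c y = Ball} = {..<Nb}" using assms by (auto simp: c_def)
  moreover have "{y. y < n \<and> c y = Hole} = {Nb..<2 * Nb + 1}" using assms by (auto simp: c_def)
  ultimately have "c \<in> golf_configs n Nb (Nb + 1)" using assms by (auto simp: golf_configs_def c_def)
  then show ?thesis by blast
qed

lemma inj_rC: assumes n: "1 \<le> n" shows "inj (rC n)"
proof (rule injI)
  fix c d assume e: "rC n c = rC n d"
  show "c = d"
  proof
    fix y show "c y = d y"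
    proof (cases "y < n")
      case True
      have "rC n c (rot n y) = rC n d (rot n y)" using e by simp
      then show ?thesis using True rot_lt[OF n] by (simp add: rC_def rinv_rot)
    next
      case False
      have "rC n c y = rC n d y" using e by simp
      then show ?thesis using False by (simp add: rC_def)
    qed
  qed
qed

lemma card_rC: assumes n: "1 \<le> n"
  shows "card {y. y < n \<and> rC n c y = s} = card {y. y < n \<and> c y = s}"
proof -
  have "{y. y < n \<and> rC n c y = s} = {z. z < n \<and> c (rinv n z) = s}" by (auto simp: rC_def)
  also have "\<dots> = rot n ` {y. y < n \<and> c y = s}" by (rule rot_Collect[OF n])
  also have "card \<dots> = card {y. y < n \<and> c y = s}"
    by (rule card_image) (rule inj_on_subset[OF inj_rot], auto)
  finally show ?thesis .
qed

lemma rC_G: assumes n: "1 \<le> n" shows "rC n ` golf_configs n Nb Nh = golf_configs n Nb Nh"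
proof (rule endo_inj_surj[OF finite_G])
  show "rC n ` golf_configs n Nb Nh \<subseteq> golf_configs n Nb Nh"
    by (auto simp: golf_configs_def card_rC[OF n]) (auto simp: rC_def)
  show "inj_on (rC n) (golf_configs n Nb Nh)" using inj_rC[OF n] by (rule inj_on_subset) simp
qed

lemma distr_C: assumes n: "1 \<le> n" and ne: "golf_configs n Nb Nh \<noteq> {}"
  shows "distr (Cm n Nb Nh) (Cm n Nb Nh) (rC n) = Cm n Nb Nh"
proof -
  have "distr (Cm n Nb Nh) (Cm n Nb Nh) (rC n) = distr (Cm n Nb Nh) (count_space UNIV) (rC n)"
    by (rule distr_cong) (simp_all add: Cm_def)
  also have "\<dots> = measure_pmf (map_pmf (rC n) (pmf_of_set (golf_configs n Nb Nh)))"
    unfolding Cm_def by (rule map_pmf_rep_eq[symmetric])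
  also have "map_pmf (rC n) (pmf_of_set (golf_configs n Nb Nh)) = pmf_of_set (rC n ` golf_configs n Nb Nh)"
    by (rule map_pmf_of_set_inj) (use inj_rC[OF n] finite_G ne in \<open>auto intro: inj_on_subset\<close>)
  finally show ?thesis by (simp add: rC_G[OF n] Cm_def)
qed

lemma inj_rinv: "inj_on (rinv n) {..<n}"
  by (rule inj_on_inverseI[where g="rot n"]) (simp add: rot_rinv)

lemma m_rP: assumes n: "1 \<le> n" shows "rP n \<in> measurable (Pm n p) (Pm n p)"
  unfolding rP_def Pm_def
  by (rule measurable_restrict) (rule measurable_component_singleton, simp add: rinv_lt[OF n])

lemma distr_P: assumes n: "1 \<le> n" shows "distr (Pm n p) (Pm n p) (rP n) = Pm n p"
  using distr_PiM_reindex[of "{..<n}" "\<lambda>_. Km p" "rinv n" "{..<n}", OF ps_K inj_rinv]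
  by (simp add: rinv_lt[OF n] Pm_def rP_def[abs_def])

lemma m_rotw: assumes n: "1 \<le> n"
  shows "rotw n \<in> measurable (golf_space n Nb Nh p) (golf_space n Nb Nh p)"
proof -
  have 1: "(\<lambda>\<omega>. rC n (fst \<omega>)) \<in> measurable (Cm n Nb Nh \<Otimes>\<^sub>M Pm n p) (Cm n Nb Nh)"
    by (rule measurable_compose[OF measurable_fst]) (simp add: Cm_def)
  have 2: "(\<lambda>\<omega>. rP n (snd \<omega>)) \<in> measurable (Cm n Nb Nh \<Otimes>\<^sub>M Pm n p) (Pm n p)"
    by (rule measurable_compose[OF measurable_snd m_rP[OF n]])
  have e: "rotw n = (\<lambda>\<omega>. (rC n (fst \<omega>), rP n (snd \<omega>)))"
    by (auto simp: rotw_def rC_def rP_def fun_eq_iff)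
  show ?thesis unfolding e golf_space_eq by (rule measurable_Pair[OF 1 2])
qed

lemma distr_rotw: assumes n: "1 \<le> n" and ne: "golf_configs n Nb Nh \<noteq> {}"
  shows "distr (golf_space n Nb Nh p) (golf_space n Nb Nh p) (rotw n) = golf_space n Nb Nh p"
proof -
  have "distr (Cm n Nb Nh) (Cm n Nb Nh) (rC n) \<Otimes>\<^sub>M distr (Pm n p) (Pm n p) (rP n)
     = distr (Cm n Nb Nh \<Otimes>\<^sub>M Pm n p) (Cm n Nb Nh \<Otimes>\<^sub>M Pm n p) (\<lambda>(x, y). (rC n x, rP n y))"
    by (rule pair_measure_distr) (auto simp: Cm_def m_rP[OF n] distr_P[OF n] intro: prob_space_imp_sigma_finite ps_P)
  then show ?thesis by (simp add: distr_C[OF n ne] distr_P[OF n] golf_space_eq rotw_split)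
qed

lemma space_Sbm: "space (Sbm p) = UNIV"
  by (simp add: Sbm_def space_stream_space)

lemma nn_integral_const_pmf: "(\<integral>\<^sup>+t. c \<partial>measure_pmf q) = c"
  by (simp add: measure_pmf.emeasure_space_1)

lemma L_sdrop:
  assumes X: "X \<in> sets (Sbm p)"
  shows "measure (Sbm p) {s \<in> space (Sbm p). sdrop m s \<in> X} = measure (Sbm p) X"
proof (induction m)
  case 0
  show ?case using sets.sets_into_space[OF X] by (simp add: space_Sbm)
next
  case (Suc m)
  interpret B: prob_space "measure_pmf (bernoulli_pmf p)" by (rule prob_space_measure_pmf)
  have X': "X \<in> sets (stream_space (measure_pmf (bernoulli_pmf p)))" using X by (simp add: Sbm_def)
  have meas: "{s \<in> space (stream_space (measure_pmf (bernoulli_pmf p))). sdrop (Suc m) s \<in> X} \<in> sets (stream_space (measure_pmf (bernoulli_pmf p)))"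
    using X' by measurable
  have "ennreal (measure (Sbm p) {s \<in> space (Sbm p). sdrop (Suc m) s \<in> X})
      = (\<integral>\<^sup>+t. ennreal (measure (Sbm p) {s \<in> space (Sbm p). sdrop m s \<in> X}) \<partial>measure_pmf (bernoulli_pmf p))"
    using prob_space.prob_stream_space[OF prob_space_measure_pmf meas] by (simp add: Sbm_def)
  also have "\<dots> = ennreal (measure (Sbm p) X)" by (simp add: Suc nn_integral_const_pmf)
  finally show ?case by (simp add: measure_nonneg)
qed

lemma L_const:
  assumes X: "X \<in> sets (Sbm p)"
  shows "measure (Sbm p) {s \<in> space (Sbm p). (\<forall>i<m. s !! i = b) \<and> sdrop m s \<in> X}
       = pmf (bernoulli_pmf p) b ^ m * measure (Sbm p) X"
proof (induction m)
  case 0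
  show ?case using sets.sets_into_space[OF X] by (simp add: space_Sbm)
next
  case (Suc m)
  interpret B: prob_space "measure_pmf (bernoulli_pmf p)" by (rule prob_space_measure_pmf)
  have X': "X \<in> sets (stream_space (measure_pmf (bernoulli_pmf p)))" using X by (simp add: Sbm_def)
  have meas: "{s \<in> space (stream_space (measure_pmf (bernoulli_pmf p))). (\<forall>i<Suc m. s !! i = b) \<and> sdrop (Suc m) s \<in> X} \<in> sets (stream_space (measure_pmf (bernoulli_pmf p)))"
    using X' by measurable
  define c where "c = measure (Sbm p) {s \<in> space (Sbm p). (\<forall>i<m. s !! i = b) \<and> sdrop m s \<in> X}"
  have step: "(\<forall>i<Suc m. (t ## x) !! i = b) \<longleftrightarrow> t = b \<and> (\<forall>i<m. x !! i = b)" for t x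
    by (auto simp: less_Suc_eq_0_disj)
  have eqt: "ennreal (measure (Sbm p) {x \<in> space (Sbm p). (\<forall>i<Suc m. (t ## x) !! i = b) \<and> sdrop (Suc m) (t ## x) \<in> X})
       = ennreal c * indicator {b} t" for t
    unfolding step by (cases "t = b") (simp_all add: c_def)
  have "ennreal (measure (Sbm p) {s \<in> space (Sbm p). (\<forall>i<Suc m. s !! i = b) \<and> sdrop (Suc m) s \<in> X})
      = (\<integral>\<^sup>+t. ennreal (measure (Sbm p) {x \<in> space (Sbm p). (\<forall>i<Suc m. (t ## x) !! i = b) \<and> sdrop (Suc m) (t ## x) \<in> X}) \<partial>measure_pmf (bernoulli_pmf p))"
    using prob_space.prob_stream_space[OF prob_space_measure_pmf meas] by (simp add: Sbm_def)
  also have "\<dots> = (\<integral>\<^sup>+t. ennreal c * indicator {b} t \<partial>measure_pmf (bernoulli_pmf p))"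
    by (simp only: eqt)
  also have "\<dots> = ennreal c * ennreal (pmf (bernoulli_pmf p) b)"
    by (simp add: nn_integral_cmult_indicator emeasure_pmf_single)
  also have "\<dots> = ennreal (pmf (bernoulli_pmf p) b ^ Suc m * measure (Sbm p) X)"
    using Suc by (simp add: c_def ennreal_mult'[symmetric] mult_ac)
  finally show ?case by (simp add: measure_nonneg)
qed

definition Eb :: "nat \<Rightarrow> nat \<Rightarrow> bool stream set" where
  "Eb n k = {s. \<forall>m<k. \<not> (\<exists>b. \<forall>i<n. s !! (m * n + i) = b)}"

lemma Eb_meas: "Eb n k \<in> sets (Sbm p)"
proof -
  have "{s \<in> space (stream_space (measure_pmf (bernoulli_pmf p))). \<forall>m<k. \<not> (\<exists>b. \<forall>i<n. s !! (m * n + i) = b)}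
     \<in> sets (stream_space (measure_pmf (bernoulli_pmf p)))"
    by measurable
  then show ?thesis by (simp add: Eb_def Sbm_def space_stream_space)
qed

lemma Eb_Suc: "Eb n (Suc k) = {s. \<not> (\<exists>b. \<forall>i<n. s !! i = b) \<and> sdrop n s \<in> Eb n k}"
proof -
  have e: "sdrop n s !! (m * n + i) = s !! (Suc m * n + i)" for s m i
    by (simp add: sdrop_snth algebra_simps)
  show ?thesis unfolding Eb_def All_less_Suc2 by (simp add: e)
qed

lemma block_rec:
  assumes n: "1 \<le> n" and p: "0 \<le> p" "p \<le> 1" and X: "X \<in> sets (Sbm p)"
  shows "measure (Sbm p) {s \<in> space (Sbm p). \<not> (\<exists>b. \<forall>i<n. s !! i = b) \<and> sdrop n s \<in> X}
       = (1 - p ^ n - (1 - p) ^ n) * measure (Sbm p) X"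
proof -
  interpret S: prob_space "Sbm p" by (rule ps_S)
  have X': "X \<in> sets (stream_space (measure_pmf (bernoulli_pmf p)))" using X by (simp add: Sbm_def)
  define A where "A = {s \<in> space (Sbm p). sdrop n s \<in> X}"
  define BT where "BT = {s \<in> space (Sbm p). (\<forall>i<n. s !! i = True) \<and> sdrop n s \<in> X}"
  define BF where "BF = {s \<in> space (Sbm p). (\<forall>i<n. s !! i = False) \<and> sdrop n s \<in> X}"
  have mA: "A \<in> sets (Sbm p)" unfolding A_def Sbm_def using X' by measurable
  have mT: "BT \<in> sets (Sbm p)" unfolding BT_def Sbm_def using X' by measurable
  have mF: "BF \<in> sets (Sbm p)" unfolding BF_def Sbm_def using X' by measurable
  have eq: "{s \<in> space (Sbm p). \<not> (\<exists>b. \<forall>i<n. s !! i = b) \<and> sdrop n s \<in> X} = A - (BT \<union> BF)"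
    unfolding A_def BT_def BF_def by (auto simp: ex_bool_eq)
  have disj: "BT \<inter> BF = {}"
    unfolding BT_def BF_def using n by auto
  have sub: "BT \<union> BF \<subseteq> A" unfolding A_def BT_def BF_def by auto
  have "measure (Sbm p) (A - (BT \<union> BF)) = measure (Sbm p) A - (measure (Sbm p) BT + measure (Sbm p) BF)"
    using S.finite_measure_Diff[OF mA _ sub] S.finite_measure_Union[OF mT mF disj] mT mF by simp
  also have "measure (Sbm p) A = measure (Sbm p) X" unfolding A_def by (rule L_sdrop[OF X])
  also have "measure (Sbm p) BT = p ^ n * measure (Sbm p) X"
    unfolding BT_def using L_const[OF X, of n True] p by simp
  also have "measure (Sbm p) BF = (1 - p) ^ n * measure (Sbm p) X"
    unfolding BF_def using L_const[OF X, of n False] p by simp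
  finally show ?thesis unfolding eq by (simp add: algebra_simps)
qed

lemma Eb_measure:
  assumes n: "1 \<le> n" and p: "0 \<le> p" "p \<le> 1"
  shows "measure (Sbm p) (Eb n k) = (1 - p ^ n - (1 - p) ^ n) ^ k"
proof (induction k)
  case 0
  interpret S: prob_space "Sbm p" by (rule ps_S)
  have "Eb n 0 = space (Sbm p)" by (simp add: Eb_def space_Sbm)
  then show ?case by (simp add: S.prob_space)
next
  case (Suc k)
  have "Eb n (Suc k) = {s \<in> space (Sbm p). \<not> (\<exists>b. \<forall>i<n. s !! i = b) \<and> sdrop n s \<in> Eb n k}"
    unfolding Eb_Suc by (simp add: space_Sbm)
  then show ?case using block_rec[OF n p Eb_meas] Suc by simp
qed

lemma never_AE:
  assumes n: "1 \<le> n" and p: "0 \<le> p" "p \<le> 1"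
  shows "AE s in Sbm p. \<exists>j b. \<forall>i<n. s !! (j + i) = b"
proof -
  interpret S: prob_space "Sbm p" by (rule ps_S)
  define N where "N = {s :: bool stream. \<not> (\<exists>j b. \<forall>i<n. s !! (j + i) = b)}"
  define c where "c = 1 - p ^ n - (1 - p) ^ n"
  have mN: "N \<in> sets (Sbm p)"
  proof -
    have "{s \<in> space (stream_space (measure_pmf (bernoulli_pmf p))). \<not> (\<exists>j b. \<forall>i<n. s !! (j + i) = b)}
       \<in> sets (stream_space (measure_pmf (bernoulli_pmf p)))"
      by measurable
    then show ?thesis by (simp add: N_def Sbm_def space_stream_space)
  qed
  have sub: "N \<subseteq> Eb n k" for k
    unfolding N_def Eb_def by blast
  have le: "measure (Sbm p) N \<le> c ^ k" for k
    using S.finite_measure_mono[OF sub Eb_meas] Eb_measure[OF n p] by (simp add: c_def)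
  have c0: "0 \<le> c" using Eb_measure[OF n p, of 1] measure_nonneg[of "Sbm p" "Eb n 1"] by (simp add: c_def)
  have pos: "0 < p ^ n + (1 - p) ^ n"
  proof (cases "p = 0")
    case True then show ?thesis using n by (simp add: power_0_left)
  next
    case False then have "0 < p ^ n" using p by simp
    moreover have "0 \<le> (1 - p) ^ n" using p by simp
    ultimately show ?thesis by linarith
  qed
  have c1: "c < 1" using pos by (simp add: c_def)
  have lim: "(\<lambda>k. c ^ k) \<longlonglongrightarrow> 0" by (rule LIMSEQ_power_zero) (use c0 c1 in simp)
  have "measure (Sbm p) N \<le> 0"
    by (rule LIMSEQ_le_const[OF lim]) (use le in blast)
  then have "measure (Sbm p) N = 0" using measure_nonneg[of "Sbm p" N] by linarith
  then have "N \<in> null_sets (Sbm p)" using mN by (simp add: S.emeasure_eq_measure null_setsI)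
  then show ?thesis by (rule AE_I') (auto simp: N_def)
qed

lemma window_covers:
  assumes n: "1 \<le> n" and w: "\<forall>i<n. s !! (j + i) = b" and z: "z < n"
  shows "\<exists>k. walk_pos n y s k = z"
proof -
  define f :: "bool \<Rightarrow> int" where "f x = (if x then 1 else -1)" for x
  define S where "S m = (\<Sum>i<m. f (s !! i))" for m
  have wp: "walk_pos n y s m = nat ((int y + S m) mod int n)" for m
    unfolding walk_pos_def S_def f_def ..
  have Sj: "i \<le> n \<Longrightarrow> S (j + i) = S j + int i * f b" for i
  proof (induction i)
    case 0 then show ?case by simp
  next
    case (Suc i)
    then have "S (j + Suc i) = S (j + i) + f (s !! (j + i))" by (simp add: S_def)
    also have "s !! (j + i) = b" using w Suc.prems by simp
    finally show ?case using Suc by (simp add: algebra_simps)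
  qed
  define a where "a = int y + S j"
  show ?thesis
  proof (cases b)
    case True
    define i where "i = nat ((int z - a) mod int n)"
    have ii: "int i = (int z - a) mod int n" using n by (simp add: i_def)
    have "i < n" using n by (simp add: i_def nat_less_iff)
    have "walk_pos n y s (j + i) = nat ((int y + S (j + i)) mod int n)" by (rule wp)
    also have "S (j + i) = S j + int i * f b" using \<open>i < n\<close> by (intro Sj) simp
    also have "int y + (S j + int i * f b) = a + (int z - a) mod int n"
      by (simp add: True f_def a_def ii)
    also have "nat ((a + (int z - a) mod int n) mod int n) = z" using z by (simp add: mod_add_right_eq)
    finally show ?thesis by blast
  next
    case False
    define i where "i = nat ((a - int z) mod int n)"
    have ii: "int i = (a - int z) mod int n" using n by (simp add: i_def)
    have "i < n" using n by (simp add: i_def nat_less_iff)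
    have "walk_pos n y s (j + i) = nat ((int y + S (j + i)) mod int n)" by (rule wp)
    also have "S (j + i) = S j + int i * f b" using \<open>i < n\<close> by (intro Sj) simp
    also have "int y + (S j + int i * f b) = a - (a - int z) mod int n"
      by (simp add: False f_def a_def ii)
    also have "nat ((a - (a - int z) mod int n) mod int n) = z" using z by (simp add: mod_diff_right_eq)
    finally show ?thesis by blast
  qed
qed

lemma walk_covers_AE:
  assumes n: "1 \<le> n" and p: "0 \<le> p" "p \<le> 1"
  shows "AE s in Sbm p. \<forall>z<n. \<exists>k. walk_pos n y s k = z"
  using never_AE[OF n p] by (rule eventually_mono) (use window_covers[OF n] in blast)

lemma space_Sbm2: "space (Sbm p) = UNIV"
  by (simp add: Sbm_def space_stream_space)

lemma space_Km: "space (Km p) = UNIV"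
  by (simp add: Km_def Ucl_def Sbm_def space_pair_measure space_stream_space)

lemma emeasure_Km_Times:
  assumes A: "A \<in> sets borel"
  shows "emeasure (Km p) (A \<times> space (Sbm p)) = emeasure Ucl A"
proof -
  interpret S: prob_space "Sbm p" by (rule ps_S)
  have A': "A \<in> sets Ucl" using A sets_Ucl by simp
  show ?thesis unfolding Km_def
    using S.emeasure_pair_measure_Times[OF A' sets.top] by (simp add: S.emeasure_space_1)
qed

lemma Ucl_Icc_le:
  assumes "0 \<le> a" "a \<le> b"
  shows "emeasure Ucl {a..b} \<le> ennreal (b - a)"
proof -
  have "emeasure Ucl {a..b} = emeasure lborel ({0..1} \<inter> {a..b}) / emeasure lborel {0..1::real}"
    unfolding Ucl_def by (rule emeasure_uniform_measure) auto
  also have "\<dots> = emeasure lborel ({0..1} \<inter> {a..b})" by (simp add: divide_ennreal_def)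
  also have "\<dots> \<le> emeasure lborel {a..b}" by (rule emeasure_mono) auto
  also have "\<dots> = ennreal (b - a)" using assms by simp
  finally show ?thesis .
qed

lemma Ucl_out: "emeasure Ucl (UNIV - {0..1}) = 0"
proof -
  have m: "UNIV - {0..1::real} \<in> sets lborel" by simp
  have "emeasure Ucl (UNIV - {0..1}) = emeasure lborel ({0..1::real} \<inter> (UNIV - {0..1})) / emeasure lborel {0..1::real}"
    unfolding Ucl_def by (rule emeasure_uniform_measure[OF _ m]) simp
  then show ?thesis by simp
qed

lemma m_clockP: "y < n \<Longrightarrow> (\<lambda>\<omega>. fst (\<omega> y)) \<in> borel_measurable (Pm n p)"
proof -
  assume y: "y < n"
  have "fst \<in> measurable (Km p) Ucl" unfolding Km_def by (rule measurable_fst)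
  then have "fst \<in> borel_measurable (Km p)" using sets_Ucl measurable_cong_sets by blast
  moreover have "(\<lambda>\<omega>. \<omega> y) \<in> measurable (Pm n p) (Km p)"
    unfolding Pm_def by (rule measurable_component_singleton) (simp add: y)
  ultimately show ?thesis using measurable_compose by blast
qed

lemma tie_bound:
  assumes y: "y < n" and z: "z < n" and yz: "y \<noteq> z" and k: "1 \<le> k"
  shows "emeasure (Pm n p) {\<omega> \<in> space (Pm n p). fst (\<omega> y) = fst (\<omega> z)} \<le> ennreal (2 / real k)"
proof -
  define I where "I j = {real j / real k .. real (Suc j) / real k}" for j
  define R where "R j = prod_emb {..<n} (\<lambda>_. Km p) {y, z} (\<Pi>\<^sub>E i\<in>{y, z}. I j \<times> space (Sbm p))" for j
  define Ou where "Ou = prod_emb {..<n} (\<lambda>_. Km p) {y} (\<Pi>\<^sub>E i\<in>{y}. (UNIV - {0..1}) \<times> space (Sbm p))"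
  have setsK: "A \<in> sets borel \<Longrightarrow> A \<times> space (Sbm p) \<in> sets (Km p)" for A
    unfolding Km_def using sets_Ucl by (intro pair_measureI) auto
  have kpos: "0 < real k" using k by simp
  have R_meas: "R j \<in> sets (Pm n p)" for j
    unfolding R_def Pm_def using y z by (intro sets_PiM_I) (auto simp: I_def intro!: setsK)
  have O_meas: "Ou \<in> sets (Pm n p)"
    unfolding Ou_def Pm_def using y by (intro sets_PiM_I) (auto intro!: setsK)
  have Ij: "emeasure Ucl (I j) \<le> ennreal (1 / real k)" for j
  proof -
    have "emeasure Ucl (I j) \<le> ennreal (real (Suc j) / real k - real j / real k)"
      unfolding I_def using kpos by (intro Ucl_Icc_le) (auto simp: divide_right_mono)
    also have "real (Suc j) / real k - real j / real k = 1 / real k" using kpos by (simp add: field_simps)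
    finally show ?thesis .
  qed
  have R_em: "emeasure (Pm n p) (R j) \<le> ennreal (1 / real k * (1 / real k))" for j
  proof -
    have "emeasure (Pm n p) (R j) = (\<Prod>i\<in>{y, z}. emeasure (Km p) (I j \<times> space (Sbm p)))"
      unfolding R_def Pm_def using y z by (intro emeasure_PiM_emb ps_K) (auto simp: I_def intro!: setsK)
    also have "\<dots> = emeasure Ucl (I j) * emeasure Ucl (I j)"
      using yz by (simp add: emeasure_Km_Times I_def)
    also have "\<dots> \<le> ennreal (1 / real k) * ennreal (1 / real k)"
      by (intro mult_mono Ij) auto
    also have "ennreal (1 / real k) * ennreal (1 / real k) = ennreal (1 / real k * (1 / real k))"
      by (rule ennreal_mult[symmetric]) auto
    finally show ?thesis .
  qed
  have O_em: "emeasure (Pm n p) Ou = 0"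
  proof -
    have "emeasure (Pm n p) Ou = (\<Prod>i\<in>{y}. emeasure (Km p) ((UNIV - {0..1}) \<times> space (Sbm p)))"
      unfolding Ou_def Pm_def using y by (intro emeasure_PiM_emb ps_K) (auto intro!: setsK)
    also have "\<dots> = 0" by (simp add: emeasure_Km_Times Ucl_out)
    finally show ?thesis .
  qed
  have cover: "{\<omega> \<in> space (Pm n p). fst (\<omega> y) = fst (\<omega> z)} \<subseteq> Ou \<union> (\<Union>j\<in>{..k}. R j)"
  proof
    fix \<omega> assume w: "\<omega> \<in> {\<omega> \<in> space (Pm n p). fst (\<omega> y) = fst (\<omega> z)}"
    then have ws: "\<omega> \<in> space (Pm n p)" and eq: "fst (\<omega> y) = fst (\<omega> z)" by auto
    have ext: "\<omega> \<in> extensional {..<n}" and comp: "\<forall>i\<in>{..<n}. \<omega> i \<in> space (Km p)"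
      using ws by (auto simp: Pm_def space_PiM PiE_def)
    define t where "t = fst (\<omega> y)"
    show "\<omega> \<in> Ou \<union> (\<Union>j\<in>{..k}. R j)"
    proof (cases "t \<in> {0..1}")
      case False
      have "\<omega> \<in> Ou" unfolding Ou_def prod_emb_iff
        using ext comp False by (auto simp: t_def space_Sbm2 PiE_def extensional_def mem_Times_iff)
      then show ?thesis by blast
    next
      case True
      define j where "j = nat \<lfloor>t * real k\<rfloor>"
      have t0: "0 \<le> t * real k" using True by simp
      have jt: "real j = of_int \<lfloor>t * real k\<rfloor>" using t0 by (simp add: j_def)
      have lo: "real j \<le> t * real k" using jt by linarith
      have hi: "t * real k \<le> real (Suc j)" using jt by linarith
      have "t * real k \<le> real k" using True kpos by simp
      then have jk: "j \<le> k" using lo by linarith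
      have tI: "t \<in> I j" unfolding I_def using lo hi kpos by (auto simp: field_simps)
      have "\<omega> \<in> R j" unfolding R_def prod_emb_iff
        using ext comp tI eq by (auto simp: t_def space_Sbm2 PiE_def extensional_def mem_Times_iff)
      then show ?thesis using jk by blast
    qed
  qed
  have "emeasure (Pm n p) {\<omega> \<in> space (Pm n p). fst (\<omega> y) = fst (\<omega> z)} \<le> emeasure (Pm n p) (Ou \<union> (\<Union>j\<in>{..k}. R j))"
    by (rule emeasure_mono[OF cover]) (use O_meas R_meas in auto)
  also have "\<dots> \<le> emeasure (Pm n p) Ou + emeasure (Pm n p) (\<Union>j\<in>{..k}. R j)"
    by (rule emeasure_subadditive) (use O_meas R_meas in auto)
  also have "emeasure (Pm n p) (\<Union>j\<in>{..k}. R j) \<le> (\<Sum>j\<in>{..k}. emeasure (Pm n p) (R j))"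
    by (rule emeasure_subadditive_finite) (use R_meas in auto)
  also have "\<dots> \<le> (\<Sum>j\<in>{..k}. ennreal (1 / real k * (1 / real k)))"
    by (rule sum_mono) (rule R_em)
  also have "\<dots> = ennreal (\<Sum>j\<in>{..k}. 1 / real k * (1 / real k))"
    by (rule sum_ennreal) simp
  also have "(\<Sum>j\<in>{..k}. 1 / real k * (1 / real k)) = real (Suc k) * (1 / real k * (1 / real k))"
    by simp
  also have "real (Suc k) * (1 / real k * (1 / real k)) \<le> 2 / real k"
    using kpos k by (simp add: field_simps)
  finally show ?thesis using O_em by (simp add: ennreal_leI)
qed

lemma tie_AE:
  assumes y: "y < n" and z: "z < n" and yz: "y \<noteq> z"
  shows "AE \<omega> in Pm n p. fst (\<omega> y) \<noteq> fst (\<omega> z)"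
proof -
  interpret P: prob_space "Pm n p" by (rule ps_P)
  define E where "E = {\<omega> \<in> space (Pm n p). fst (\<omega> y) = fst (\<omega> z)}"
  note m_clockP[OF y, measurable] m_clockP[OF z, measurable]
  have mE: "E \<in> sets (Pm n p)" unfolding E_def by measurable
  have le: "measure (Pm n p) E \<le> 2 * inverse (real (Suc m))" for m
  proof -
    have "ennreal (measure (Pm n p) E) \<le> ennreal (2 / real (Suc m))"
      using tie_bound[OF y z yz, of "Suc m" p] by (simp add: E_def P.emeasure_eq_measure)
    then show ?thesis by (simp add: ennreal_le_iff divide_inverse)
  qed
  have lim: "(\<lambda>m. 2 * inverse (real (Suc m))) \<longlonglongrightarrow> 0"
    using tendsto_mult[OF tendsto_const LIMSEQ_inverse_real_of_nat, of 2] by simp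
  have "measure (Pm n p) E \<le> 0"
    by (rule LIMSEQ_le_const[OF lim]) (use le in blast)
  then have "measure (Pm n p) E = 0" using measure_nonneg[of "Pm n p" E] by linarith
  then have "E \<in> null_sets (Pm n p)" using mE by (simp add: P.emeasure_eq_measure null_setsI)
  then show ?thesis by (rule AE_I') (auto simp: E_def)
qed

lemma AE_lift_fst:
  assumes sf: "sigma_finite_measure N" and ae: "AE x in M1. Q x"
  shows "AE \<omega> in M1 \<Otimes>\<^sub>M N. Q (fst \<omega>)"
proof -
  from ae obtain A where A: "{x \<in> space M1. \<not> Q x} \<subseteq> A" "emeasure M1 A = 0" "A \<in> sets M1"
    by (auto elim!: AE_E)
  have "A \<times> space N \<in> null_sets (M1 \<Otimes>\<^sub>M N)"
    by (rule sigma_finite_measure.times_in_null_sets1[OF sf]) (use A in auto)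
  then show ?thesis by (rule AE_I') (use A in \<open>auto simp: space_pair_measure\<close>)
qed

lemma AE_lift_snd:
  assumes sf: "sigma_finite_measure N" and ae: "AE y in N. Q y"
  shows "AE \<omega> in M1 \<Otimes>\<^sub>M N. Q (snd \<omega>)"
proof -
  from ae obtain B where B: "{x \<in> space N. \<not> Q x} \<subseteq> B" "emeasure N B = 0" "B \<in> sets N"
    by (auto elim!: AE_E)
  have "space M1 \<times> B \<in> null_sets (M1 \<Otimes>\<^sub>M N)"
    by (rule sigma_finite_measure.times_in_null_sets2[OF sf]) (use B in auto)
  then show ?thesis by (rule AE_I') (use B in \<open>auto simp: space_pair_measure\<close>)
qed

lemma AE_good:
  assumes n: "1 \<le> n" and p: "0 \<le> p" "p \<le> 1" and ne: "golf_configs n Nb Nh \<noteq> {}"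
  shows "AE \<omega> in golf_space n Nb Nh p. fst \<omega> \<in> golf_configs n Nb Nh
     \<and> inj_on (\<lambda>y. fst (snd \<omega> y)) {..<n}
     \<and> (\<forall>y<n. \<forall>z<n. \<exists>k. walk_pos n y (snd (snd \<omega> y)) k = z)"
proof -
  have sfP: "sigma_finite_measure (Pm n p)" by (rule prob_space_imp_sigma_finite[OF ps_P])
  have sfS: "sigma_finite_measure (Sbm p)" by (rule prob_space_imp_sigma_finite[OF ps_S])
  have g1: "AE \<omega> in golf_space n Nb Nh p. fst \<omega> \<in> golf_configs n Nb Nh"
  proof -
    have "AE c in Cm n Nb Nh. c \<in> golf_configs n Nb Nh"
      unfolding Cm_def using AE_measure_pmf[of "pmf_of_set (golf_configs n Nb Nh)"] finite_G ne by simp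
    then show ?thesis unfolding golf_space_eq by (rule AE_lift_fst[OF sfP])
  qed
  have g2: "AE \<omega> in golf_space n Nb Nh p. \<forall>y\<in>{..<n}. \<forall>z\<in>{..<n}. y \<noteq> z \<longrightarrow> fst (snd \<omega> y) \<noteq> fst (snd \<omega> z)"
  proof -
    have "AE \<omega> in Pm n p. \<forall>y\<in>{..<n}. \<forall>z\<in>{..<n}. y \<noteq> z \<longrightarrow> fst (\<omega> y) \<noteq> fst (\<omega> z)"
      by (intro AE_finite_allI) (auto intro: tie_AE)
    then show ?thesis unfolding golf_space_eq by (rule AE_lift_snd[OF sfP])
  qed
  have g3: "AE \<omega> in golf_space n Nb Nh p. \<forall>y\<in>{..<n}. \<forall>z<n. \<exists>k. walk_pos n y (snd (snd \<omega> y)) k = z"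
  proof -
    have "AE \<omega> in Pm n p. \<forall>y\<in>{..<n}. \<forall>z<n. \<exists>k. walk_pos n y (snd (\<omega> y)) k = z"
    proof (intro AE_finite_allI)
      fix y assume y: "y \<in> {..<n}"
      have "AE \<kappa> in Km p. \<forall>z<n. \<exists>k. walk_pos n y (snd \<kappa>) k = z"
        unfolding Km_def by (rule AE_lift_snd[OF sfS walk_covers_AE[OF n p]])
      then show "AE \<omega> in Pm n p. \<forall>z<n. \<exists>k. walk_pos n y (snd (\<omega> y)) k = z"
        unfolding Pm_def by (rule AE_PiM_component[OF ps_K y])
    qed simp
    then show ?thesis unfolding golf_space_eq by (rule AE_lift_snd[OF sfP])
  qed
  show ?thesis using g1 g2 g3
  proof (eventually_elim)
    case (elim \<omega>)
    have "inj_on (\<lambda>y. fst (snd \<omega> y)) {..<n}"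
      by (rule inj_onI) (use elim(2) in blast)
    then show ?case using elim by blast
  qed
qed

lemma pred_sets: "(\<lambda>\<omega>. P \<omega>) \<in> measurable M (count_space UNIV) \<Longrightarrow> {\<omega> \<in> space M. P \<omega>} \<in> sets M"
proof -
  assume m: "(\<lambda>\<omega>. P \<omega>) \<in> measurable M (count_space UNIV)"
  have "(\<lambda>\<omega>. P \<omega>) -` {True} \<inter> space M \<in> sets M" by (rule measurable_sets[OF m]) simp
  moreover have "(\<lambda>\<omega>. P \<omega>) -` {True} \<inter> space M = {\<omega> \<in> space M. P \<omega>}" by auto
  ultimately show ?thesis by simp
qed

lemma rot_inv:
  assumes n: "1 \<le> n" and ne: "golf_configs n Nb Nh \<noteq> {}"
    and F: "F \<in> measurable (golf_space n Nb Nh p) (count_space UNIV)"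
    and AEF: "AE \<omega> in golf_space n Nb Nh p. F (rotw n \<omega>) = rot n ` F \<omega>"
  shows "measure (golf_space n Nb Nh p) {\<omega> \<in> space (golf_space n Nb Nh p). Q (F \<omega>)}
       = measure (golf_space n Nb Nh p) {\<omega> \<in> space (golf_space n Nb Nh p). Q (rot n ` F \<omega>)}"
proof -
  let ?M = "golf_space n Nb Nh p"
  have mr: "rotw n \<in> measurable ?M ?M" by (rule m_rotw[OF n])
  have s1: "{\<omega> \<in> space ?M. Q (F \<omega>)} \<in> sets ?M"
    by (rule pred_sets, rule measurable_compose[OF F]) simp
  have s2: "{\<omega> \<in> space ?M. Q (F (rotw n \<omega>))} \<in> sets ?M"
    by (rule pred_sets, rule measurable_compose[OF measurable_compose[OF mr F]]) simp
  have s3: "{\<omega> \<in> space ?M. Q (rot n ` F \<omega>)} \<in> sets ?M"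
    by (rule pred_sets, rule measurable_compose[OF F]) simp
  have "measure ?M {\<omega> \<in> space ?M. Q (F \<omega>)} = measure (distr ?M ?M (rotw n)) {\<omega> \<in> space ?M. Q (F \<omega>)}"
    by (simp add: distr_rotw[OF n ne])
  also have "\<dots> = measure ?M (rotw n -` {\<omega> \<in> space ?M. Q (F \<omega>)} \<inter> space ?M)"
    by (rule measure_distr[OF mr s1])
  also have "rotw n -` {\<omega> \<in> space ?M. Q (F \<omega>)} \<inter> space ?M = {\<omega> \<in> space ?M. Q (F (rotw n \<omega>))}"
    using measurable_space[OF mr] by auto
  also have "measure ?M \<dots> = measure ?M {\<omega> \<in> space ?M. Q (rot n ` F \<omega>)}"
    by (rule measure_eq_AE[OF _ s2 s3]) (use AEF in \<open>auto elim!: eventually_mono\<close>)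
  finally show ?thesis .
qed

lemma rot_mod: "1 \<le> n \<Longrightarrow> rot n (k mod n) = Suc k mod n"
  by (simp add: rot_def mod_Suc_eq)

lemma const_mod:
  assumes n: "1 \<le> n" and inv: "\<And>x. x < n \<Longrightarrow> f (rot n x) = (f x :: real)"
  shows "x < n \<Longrightarrow> f x = f 0"
proof -
  have "f (k mod n) = f 0" for k
  proof (induction k)
    case 0 then show ?case by simp
  next
    case (Suc k)
    have "f (Suc k mod n) = f (rot n (k mod n))" by (simp add: rot_mod[OF n])
    also have "\<dots> = f (k mod n)" using n by (intro inv) simp
    finally show ?case using Suc by simp
  qed
  moreover assume "x < n"
  ultimately show ?thesis by (metis mod_less)
qed

theorem mainTheorem10:
  fixes n Nb x :: nat and p :: real
  assumes "1 \<le> n" and "2 * Nb + 1 \<le> n" and "0 \<le> p" and "p \<le> 1" and "x < n"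
  shows "golf_prob n Nb (Nb + 1) p {\<omega>. golf_H1 n \<omega> = {x}} = 1 / real n
    \<and> golf_cond_prob n Nb (Nb + 1) p {\<omega>. golf_H1 n \<omega> = {x}} {\<omega>. x \<in> golf_H0 n \<omega>}
        = 1 / real (Nb + 1)"
proof -
  let ?M = "golf_space n Nb (Nb + 1) p"
  interpret M: prob_space ?M by (rule ps_M)
  have n: "1 \<le> n" by fact
  have p: "0 \<le> p" "p \<le> 1" by fact+
  have ne: "golf_configs n Nb (Nb + 1) \<noteq> {}" by (rule G_ne) fact
  note good = AE_good[OF n p ne]
  define f where "f x = measure ?M {\<omega> \<in> space ?M. golf_H1 n \<omega> = {x}}" for x
  define g where "g x = measure ?M {\<omega> \<in> space ?M. x \<in> golf_H0 n \<omega>}" for x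
  have mH0: "golf_H0 n \<in> measurable ?M (count_space UNIV)"
    by (rule measurable_compose[OF m_H0]) simp
  have mH1: "golf_H1 n \<in> measurable ?M (count_space UNIV)" by (rule m_H1)
  have AE1: "AE \<omega> in ?M. golf_H1 n (rotw n \<omega>) = rot n ` golf_H1 n \<omega>"
    using good
  proof (rule eventually_mono)
    fix \<omega> :: golf_outcome assume "fst \<omega> \<in> golf_configs n Nb (Nb + 1) \<and> inj_on (\<lambda>y. fst (snd \<omega> y)) {..<n}
     \<and> (\<forall>y<n. \<forall>z<n. \<exists>k. walk_pos n y (snd (snd \<omega> y)) k = z)"
    then have "inj_on (\<lambda>y. fst (snd \<omega> y)) {..<n}" by blast
    then have "inj_on (\<lambda>y. fst (snd \<omega> y)) (golf_balls n \<omega>)"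
      by (rule inj_on_subset) (rule balls_sub)
    then show "golf_H1 n (rotw n \<omega>) = rot n ` golf_H1 n \<omega>" by (rule H1_rotw[OF n])
  qed
  have AE0: "AE \<omega> in ?M. golf_H0 n (rotw n \<omega>) = rot n ` golf_H0 n \<omega>"
    by (rule AE_I2) (rule H0_rotw[OF n])
  have H1sub: "golf_H1 n \<omega> \<subseteq> {..<n}" for \<omega>
    using H1_sub_H0[of n \<omega>] H0_sub[of n \<omega>] by blast
  have finv: "f (rot n y) = f y" if y: "y < n" for y
  proof -
    have "f (rot n y) = measure ?M {\<omega> \<in> space ?M. rot n ` golf_H1 n \<omega> = {rot n y}}"
      unfolding f_def by (rule rot_inv[OF n ne mH1 AE1])
    also have "{\<omega> \<in> space ?M. rot n ` golf_H1 n \<omega> = {rot n y}} = {\<omega> \<in> space ?M. golf_H1 n \<omega> = {y}}"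
    proof (rule Collect_cong)
      fix \<omega>
      have "rot n ` golf_H1 n \<omega> = rot n ` {y} \<longleftrightarrow> golf_H1 n \<omega> = {y}"
        by (rule inj_on_image_eq_iff[OF inj_rot]) (use H1sub y in auto)
      then show "(\<omega> \<in> space ?M \<and> rot n ` golf_H1 n \<omega> = {rot n y}) = (\<omega> \<in> space ?M \<and> golf_H1 n \<omega> = {y})"
        by simp
    qed
    finally show ?thesis unfolding f_def .
  qed
  have ginv: "g (rot n y) = g y" if y: "y < n" for y
  proof -
    have "g (rot n y) = measure ?M {\<omega> \<in> space ?M. rot n y \<in> rot n ` golf_H0 n \<omega>}"
      unfolding g_def by (rule rot_inv[OF n ne mH0 AE0])
    also have "{\<omega> \<in> space ?M. rot n y \<in> rot n ` golf_H0 n \<omega>} = {\<omega> \<in> space ?M. y \<in> golf_H0 n \<omega>}"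
    proof (rule Collect_cong)
      fix \<omega>
      have "rot n y \<in> rot n ` golf_H0 n \<omega> \<longleftrightarrow> y \<in> golf_H0 n \<omega>"
        by (rule inj_on_image_mem_iff[OF inj_rot]) (use H0_sub y in auto)
      then show "(\<omega> \<in> space ?M \<and> rot n y \<in> rot n ` golf_H0 n \<omega>) = (\<omega> \<in> space ?M \<and> y \<in> golf_H0 n \<omega>)"
        by simp
    qed
    finally show ?thesis unfolding g_def .
  qed
  have fc: "y < n \<Longrightarrow> f y = f 0" for y by (rule const_mod[where f=f, OF n finv])
  have gc: "y < n \<Longrightarrow> g y = g 0" for y by (rule const_mod[where f=g, OF n ginv])
  have sH1: "{\<omega> \<in> space ?M. golf_H1 n \<omega> = {y}} \<in> sets ?M" for y
    by (rule pred_sets, rule measurable_compose[OF mH1]) simp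
  have sH0: "{\<omega> \<in> space ?M. y \<in> golf_H0 n \<omega>} \<in> sets ?M" for y
    by (rule pred_sets, rule measurable_compose[OF mH0]) simp
  have sumf: "(\<Sum>y<n. f y) = 1"
  proof -
    have U: "{\<omega> \<in> space ?M. \<exists>y<n. golf_H1 n \<omega> = {y}} = (\<Union>y\<in>{..<n}. {\<omega> \<in> space ?M. golf_H1 n \<omega> = {y}})"
      by auto
    have "measure ?M (\<Union>y\<in>{..<n}. {\<omega> \<in> space ?M. golf_H1 n \<omega> = {y}}) = (\<Sum>y<n. f y)"
      unfolding f_def
      by (rule M.finite_measure_finite_Union) (use sH1 in \<open>auto simp: disjoint_family_on_def\<close>)
    moreover have "measure ?M {\<omega> \<in> space ?M. \<exists>y<n. golf_H1 n \<omega> = {y}} = 1"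
    proof (subst M.prob_Collect_eq_1)
      show "{\<omega> \<in> space ?M. \<exists>y<n. golf_H1 n \<omega> = {y}} \<in> sets ?M" unfolding U using sH1 by auto
      show "AE \<omega> in ?M. \<exists>y<n. golf_H1 n \<omega> = {y}"
        using good by (rule eventually_mono) (use H1_single[OF n] in blast)
    qed
    ultimately show ?thesis unfolding U by simp
  qed
  have f1: "f y = 1 / real n" if "y < n" for y
  proof -
    have "(\<Sum>y<n. f y) = (\<Sum>y<n. f 0)" by (rule sum.cong) (auto intro: fc)
    then have "(\<Sum>y<n. f y) = real n * f 0" by simp
    then show ?thesis using sumf fc[OF that] n by (simp add: field_simps)
  qed
  have sumg: "(\<Sum>y<n. g y) = real (Nb + 1)"
  proof -
    have gi: "g y = integral\<^sup>L ?M (indicator {\<omega> \<in> space ?M. y \<in> golf_H0 n \<omega>})" for y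
      by (simp add: g_def Int_absorb2)
    have int: "integrable ?M (indicator {\<omega> \<in> space ?M. y \<in> golf_H0 n \<omega>} :: _ \<Rightarrow> real)" for y
      using M.emeasure_finite[of "{\<omega> \<in> space ?M. y \<in> golf_H0 n \<omega>}"]
      by (intro integrable_real_indicator[OF sH0]) (simp add: less_top infinity_ennreal_def)
    have "(\<Sum>y<n. g y) = integral\<^sup>L ?M (\<lambda>\<omega>. \<Sum>y<n. indicator {\<omega> \<in> space ?M. y \<in> golf_H0 n \<omega>} \<omega>)"
      unfolding gi by (rule Bochner_Integration.integral_sum[symmetric]) (rule int)
    also have "\<dots> = integral\<^sup>L ?M (\<lambda>\<omega>. real (Nb + 1))"
    proof (rule integral_cong_AE)
      show "(\<lambda>\<omega>. \<Sum>y<n. indicator {\<omega> \<in> space ?M. y \<in> golf_H0 n \<omega>} \<omega> :: real) \<in> borel_measurable ?M"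
        using sH0 by (intro borel_measurable_sum borel_measurable_indicator) auto
      show "(\<lambda>\<omega>. real (Nb + 1)) \<in> borel_measurable ?M" by simp
      have c: "card (golf_H0 n \<omega>) = Nb + 1" if "fst \<omega> \<in> golf_configs n Nb (Nb + 1)" for \<omega>
        using that by (auto simp: golf_configs_def golf_H0_def)
      have gs: "AE \<omega> in ?M. \<omega> \<in> space ?M \<and> fst \<omega> \<in> golf_configs n Nb (Nb + 1)"
        using good AE_space by eventually_elim auto
      show "AE \<omega> in ?M. (\<Sum>y<n. indicator {\<omega> \<in> space ?M. y \<in> golf_H0 n \<omega>} \<omega>) = real (Nb + 1)"
        using gs
      proof (rule eventually_mono)
        fix \<omega> assume w: "\<omega> \<in> space ?M \<and> fst \<omega> \<in> golf_configs n Nb (Nb + 1)"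
        have "(\<Sum>y<n. indicator {\<omega> \<in> space ?M. y \<in> golf_H0 n \<omega>} \<omega> :: real) = (\<Sum>y<n. indicator (golf_H0 n \<omega>) y)"
          using w by (intro sum.cong) (auto simp: indicator_def)
        also have "\<dots> = real (card ({..<n} \<inter> golf_H0 n \<omega>))"
          by (simp add: indicator_def sum.If_cases)
        also have "{..<n} \<inter> golf_H0 n \<omega> = golf_H0 n \<omega>" using H0_sub by blast
        finally show "(\<Sum>y<n. indicator {\<omega> \<in> space ?M. y \<in> golf_H0 n \<omega>} \<omega>) = real (Nb + 1)"
          using c w by simp
      qed
    qed
    also have "\<dots> = real (Nb + 1)" using M.prob_space by simp
    finally show ?thesis .
  qed
  have g1: "g y = real (Nb + 1) / real n" if "y < n" for y
  proof -
    have "(\<Sum>y<n. g y) = (\<Sum>y<n. g 0)" by (rule sum.cong) (auto intro: gc)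
    then have "(\<Sum>y<n. g y) = real n * g 0" by simp
    then show ?thesis using sumg gc[OF that] n by (simp add: field_simps)
  qed
  have e1: "{\<omega>. golf_H1 n \<omega> = {x}} \<inter> space ?M = {\<omega> \<in> space ?M. golf_H1 n \<omega> = {x}}" by auto
  have e2: "{\<omega>. golf_H1 n \<omega> = {x}} \<inter> {\<omega>. x \<in> golf_H0 n \<omega>} \<inter> space ?M = {\<omega> \<in> space ?M. golf_H1 n \<omega> = {x}}"
    using H1_sub_H0 by blast
  have e3: "{\<omega>. x \<in> golf_H0 n \<omega>} \<inter> space ?M = {\<omega> \<in> space ?M. x \<in> golf_H0 n \<omega>}" by auto
  have P1: "golf_prob n Nb (Nb + 1) p {\<omega>. golf_H1 n \<omega> = {x}} = 1 / real n"
    unfolding golf_prob_def e1 using f1[OF assms(5)] by (simp add: f_def)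
  have P2: "golf_cond_prob n Nb (Nb + 1) p {\<omega>. golf_H1 n \<omega> = {x}} {\<omega>. x \<in> golf_H0 n \<omega>} = 1 / real (Nb + 1)"
  proof -
    have "golf_cond_prob n Nb (Nb + 1) p {\<omega>. golf_H1 n \<omega> = {x}} {\<omega>. x \<in> golf_H0 n \<omega>}
        = (1 / real n) / (real (Nb + 1) / real n)"
      unfolding golf_cond_prob_def golf_prob_def e2 e3
      using f1[OF assms(5)] g1[OF assms(5)] by (simp add: f_def g_def)
    also have "\<dots> = 1 / real (Nb + 1)" using n by (simp add: field_simps)
    finally show ?thesis .
  qed
  show ?thesis using P1 P2 by blast
qed

end
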